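(* Let $(Q_1,* )$ and $(Q_2,\cdot)$ be automorphic loops and let $\varphi:Q_1\to Q_2$ be a special half-isomorphism. If $\varphi$ has no GG-triple, then $\varphi$ is trivial, i.e. it is either an isomorphism or an anti-isomorphism.
   Context: A loop is a set with a binary operation in which all equations $ax=b$, $ya=b$ are uniquely solvable and which has a two-sided identity. For $a\in L$, $R_a:x\mapsto xa$, $L_a:x\mapsto ax$; the inner mapping group is the stabilizer of the identity in the group generated by all $R_a,L_a$. A loop is automorphic if every inner mapping is an automorphism. A half-isomorphism between loops $(L,* )$, $(L',\cdot)$ is a bijection $f$ with $f(x*y)\in\{f(x)\cdot f(y),f(y)\cdot f(x)\}$ for all $x,y\in L$; it is special if $f^{-1}$ is also a half-isomorphism, and trivial if it is an isomorphism or an anti-isomorphism ($f(x*y)=f(y)\cdot f(x)$ for all $x,y$). A GG-triple of a half-isomorphism $f$ is a triple $(x,y,z)$ of elements of $L$ such that $f(x*y)=f(x)\cdot f(y)\neq f(y)\cdot f(x)$ and $f(x*z)=f(z)\cdot f(x)\neq f(x)\cdot f(z)$. *)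

theory Defs
  imports Main
begin

text \<open>A loop is represented by a type 'a (its carrier is UNIV) together with a binary operation.\<close>

definition is_loop :: "('a \<Rightarrow> 'a \<Rightarrow> 'a) \<Rightarrow> bool" where
  "is_loop m \<longleftrightarrow>
     (\<forall>a b. \<exists>!x. m a x = b) \<and> (\<forall>a b. \<exists>!y. m y a = b) \<and>
     (\<exists>e. \<forall>x. m e x = x \<and> m x e = x)"

definition loop_unit :: "('a \<Rightarrow> 'a \<Rightarrow> 'a) \<Rightarrow> 'a" where
  "loop_unit m = (THE e. \<forall>x. m e x = x \<and> m x e = x)"

definition Rmap :: "('a \<Rightarrow> 'a \<Rightarrow> 'a) \<Rightarrow> 'a \<Rightarrow> 'a \<Rightarrow> 'a" where
  "Rmap m a = (\<lambda>x. m x a)"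

definition Lmap :: "('a \<Rightarrow> 'a \<Rightarrow> 'a) \<Rightarrow> 'a \<Rightarrow> 'a \<Rightarrow> 'a" where
  "Lmap m a = (\<lambda>x. m a x)"

inductive_set mult_group :: "('a \<Rightarrow> 'a \<Rightarrow> 'a) \<Rightarrow> ('a \<Rightarrow> 'a) set" for m where
  mg_id: "id \<in> mult_group m"
| mg_R: "Rmap m a \<in> mult_group m"
| mg_L: "Lmap m a \<in> mult_group m"
| mg_comp: "f \<in> mult_group m \<Longrightarrow> g \<in> mult_group m \<Longrightarrow> f \<circ> g \<in> mult_group m"
| mg_inv: "f \<in> mult_group m \<Longrightarrow> inv f \<in> mult_group m"

definition inner_mappings :: "('a \<Rightarrow> 'a \<Rightarrow> 'a) \<Rightarrow> ('a \<Rightarrow> 'a) set" where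
  "inner_mappings m = {f \<in> mult_group m. f (loop_unit m) = loop_unit m}"

definition is_automorphism :: "('a \<Rightarrow> 'a \<Rightarrow> 'a) \<Rightarrow> ('a \<Rightarrow> 'a) \<Rightarrow> bool" where
  "is_automorphism m f \<longleftrightarrow> bij f \<and> (\<forall>x y. f (m x y) = m (f x) (f y))"

definition automorphic_loop :: "('a \<Rightarrow> 'a \<Rightarrow> 'a) \<Rightarrow> bool" where
  "automorphic_loop m \<longleftrightarrow> is_loop m \<and> (\<forall>f \<in> inner_mappings m. is_automorphism m f)"

definition half_isomorphism ::
  "('a \<Rightarrow> 'a \<Rightarrow> 'a) \<Rightarrow> ('b \<Rightarrow> 'b \<Rightarrow> 'b) \<Rightarrow> ('a \<Rightarrow> 'b) \<Rightarrow> bool" where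
  "half_isomorphism m1 m2 f \<longleftrightarrow> bij f \<and>
     (\<forall>x y. f (m1 x y) = m2 (f x) (f y) \<or> f (m1 x y) = m2 (f y) (f x))"

definition special_half_isomorphism ::
  "('a \<Rightarrow> 'a \<Rightarrow> 'a) \<Rightarrow> ('b \<Rightarrow> 'b \<Rightarrow> 'b) \<Rightarrow> ('a \<Rightarrow> 'b) \<Rightarrow> bool" where
  "special_half_isomorphism m1 m2 f \<longleftrightarrow>
     half_isomorphism m1 m2 f \<and> half_isomorphism m2 m1 (inv f)"

definition isomorphism ::
  "('a \<Rightarrow> 'a \<Rightarrow> 'a) \<Rightarrow> ('b \<Rightarrow> 'b \<Rightarrow> 'b) \<Rightarrow> ('a \<Rightarrow> 'b) \<Rightarrow> bool" where
  "isomorphism m1 m2 f \<longleftrightarrow> bij f \<and> (\<forall>x y. f (m1 x y) = m2 (f x) (f y))"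

definition anti_isomorphism ::
  "('a \<Rightarrow> 'a \<Rightarrow> 'a) \<Rightarrow> ('b \<Rightarrow> 'b \<Rightarrow> 'b) \<Rightarrow> ('a \<Rightarrow> 'b) \<Rightarrow> bool" where
  "anti_isomorphism m1 m2 f \<longleftrightarrow> bij f \<and> (\<forall>x y. f (m1 x y) = m2 (f y) (f x))"

definition trivial_half_isomorphism ::
  "('a \<Rightarrow> 'a \<Rightarrow> 'a) \<Rightarrow> ('b \<Rightarrow> 'b \<Rightarrow> 'b) \<Rightarrow> ('a \<Rightarrow> 'b) \<Rightarrow> bool" where
  "trivial_half_isomorphism m1 m2 f \<longleftrightarrow> isomorphism m1 m2 f \<or> anti_isomorphism m1 m2 f"

definition GG_triple ::
  "('a \<Rightarrow> 'a \<Rightarrow> 'a) \<Rightarrow> ('b \<Rightarrow> 'b \<Rightarrow> 'b) \<Rightarrow> ('a \<Rightarrow> 'b) \<Rightarrow> 'a \<Rightarrow> 'a \<Rightarrow> 'a \<Rightarrow> bool" where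
  "GG_triple m1 m2 f x y z \<longleftrightarrow>
     f (m1 x y) = m2 (f x) (f y) \<and> m2 (f x) (f y) \<noteq> m2 (f y) (f x) \<and>
     f (m1 x z) = m2 (f z) (f x) \<and> m2 (f z) (f x) \<noteq> m2 (f x) (f z)"

end

theory Submission
  imports Defs
begin

lemma loop_unit_is:
  assumes "is_loop m"
  shows "\<forall>x. m (loop_unit m) x = x \<and> m x (loop_unit m) = x"
proof -
  obtain e where e: "\<forall>x. m e x = x \<and> m x e = x" using assms unfolding is_loop_def by blast
  have "(THE e. \<forall>x. m e x = x \<and> m x e = x) = e"
  proof (rule the_equality)
    show "\<forall>x. m e x = x \<and> m x e = x" using e .
    fix e' assume h: "\<forall>x. m e' x = x \<and> m x e' = x"
    have 1: "m e' e = e" using h by blast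
    have 2: "m e' e = e'" using e by blast
    show "e' = e" using 1 2 by simp
  qed
  with e show ?thesis unfolding loop_unit_def by simp
qed

lemma ex1_same: "\<exists>!z. P z \<Longrightarrow> P x \<Longrightarrow> P y \<Longrightarrow> x = y"
proof -
  assume "\<exists>!z. P z" "P x" "P y"
  from \<open>\<exists>!z. P z\<close> obtain z where "P z" and u: "\<And>w. P w \<Longrightarrow> w = z" by (rule ex1E) blast
  have "x = z" using u \<open>P x\<close> .
  moreover have "y = z" using u \<open>P y\<close> .
  ultimately show "x = y" by simp
qed

lemma loop_lcancel:
  assumes "is_loop m" "m a x = m a y" shows "x = y"
proof -
  have h: "\<forall>a b. \<exists>!x. m a x = b" using assms(1) unfolding is_loop_def by (elim conjE)
  have "\<exists>!z. m a z = m a x" by (rule h[rule_format])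
  thus ?thesis by (rule ex1_same) (use assms(2) in simp_all)
qed

lemma loop_rcancel:
  assumes "is_loop m" "m x a = m y a" shows "x = y"
proof -
  have h: "\<forall>a b. \<exists>!y. m y a = b" using assms(1) unfolding is_loop_def by (elim conjE)
  have "\<exists>!z. m z a = m x a" by (rule h[rule_format])
  thus ?thesis by (rule ex1_same) (use assms(2) in simp_all)
qed

lemma Lmap_bij:
  assumes "is_loop m" shows "bij (Lmap m c)"
proof (rule bijI)
  show "inj (Lmap m c)" unfolding inj_def Lmap_def using loop_lcancel[OF assms] by blast
  show "surj (Lmap m c)"
  proof -
    have h: "\<forall>a b. \<exists>!x. m a x = b" using assms unfolding is_loop_def by (elim conjE)
    have "\<exists>x. m c x = b" for b using ex1_implies_ex[OF h[rule_format, of c b]] .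
    hence "\<forall>b. \<exists>x. m c x = b" by blast
    hence "\<forall>b. \<exists>x. b = m c x" by (simp add: eq_commute)
    thus ?thesis unfolding Lmap_def surj_def by blast
  qed
qed

lemma T_auto:
  assumes "automorphic_loop m"
  shows "is_automorphism m (inv (Lmap m c) \<circ> Rmap m c)"
proof -
  have L: "is_loop m" using assms(1) unfolding automorphic_loop_def by (elim conjE)
  let ?e = "loop_unit m"
  have u: "\<forall>x. m ?e x = x \<and> m x ?e = x" using loop_unit_is[OF L] .
  have mg: "inv (Lmap m c) \<circ> Rmap m c \<in> mult_group m"
    by (rule mult_group.mg_comp[OF mult_group.mg_inv[OF mult_group.mg_L] mult_group.mg_R])
  have "(inv (Lmap m c) \<circ> Rmap m c) ?e = ?e"
  proof -
    have "Rmap m c ?e = c" using u by (simp add: Rmap_def)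
    moreover have "Lmap m c ?e = c" using u by (simp add: Lmap_def)
    moreover have "inv (Lmap m c) c = ?e"
      using inv_f_eq[OF bij_is_inj[OF Lmap_bij[OF L]] \<open>Lmap m c ?e = c\<close>] .
    ultimately show ?thesis by simp
  qed
  with mg have "inv (Lmap m c) \<circ> Rmap m c \<in> inner_mappings m" unfolding inner_mappings_def by simp
  thus ?thesis using assms unfolding automorphic_loop_def by blast
qed

lemma T_fix:
  assumes "is_loop m"
  shows "(inv (Lmap m c) \<circ> Rmap m c) a = a \<longleftrightarrow> m a c = m c a"
proof -
  have "(a = inv (Lmap m c) (m a c)) = (Lmap m c a = m a c)"
    using bij_inv_eq_iff[OF Lmap_bij[OF assms]] .
  hence "inv (Lmap m c) (m a c) = a \<longleftrightarrow> m a c = Lmap m c a" by argo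
  moreover have "(inv (Lmap m c) \<circ> Rmap m c) a = inv (Lmap m c) (m a c)" by (simp add: Rmap_def)
  moreover have "Lmap m c a = m c a" by (simp add: Lmap_def)
  ultimately show ?thesis by simp
qed

lemma comm_ldiv:
  assumes "automorphic_loop m" "m a c = m c a" "m (m a b) c = m c (m a b)"
  shows "m b c = m c b"
proof -
  have L: "is_loop m" using assms(1) unfolding automorphic_loop_def by (elim conjE)
  define T where "T = inv (Lmap m c) \<circ> Rmap m c"
  have A0: "\<forall>x y. T (m x y) = m (T x) (T y)" using T_auto[OF assms(1), of c] unfolding is_automorphism_def T_def by (elim conjE)
  have A: "T (m a b) = m (T a) (T b)" using A0 by blast
  have 1: "T a = a" unfolding T_def using iffD2[OF T_fix[OF L, of c a] assms(2)] .
  have 2: "T (m a b) = m a b" unfolding T_def using iffD2[OF T_fix[OF L, of c "m a b"] assms(3)] .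
  have "m a (T b) = m a b" using A 1 2 by simp
  hence "T b = b" by (rule loop_lcancel[OF L])
  thus ?thesis using iffD1[OF T_fix[OF L, of c b]] unfolding T_def by simp
qed

lemma comm_rdiv:
  assumes "automorphic_loop m" "m b c = m c b" "m (m a b) c = m c (m a b)"
  shows "m a c = m c a"
proof -
  have L: "is_loop m" using assms(1) unfolding automorphic_loop_def by (elim conjE)
  define T where "T = inv (Lmap m c) \<circ> Rmap m c"
  have A0: "\<forall>x y. T (m x y) = m (T x) (T y)" using T_auto[OF assms(1), of c] unfolding is_automorphism_def T_def by (elim conjE)
  have A: "T (m a b) = m (T a) (T b)" using A0 by blast
  have 1: "T b = b" unfolding T_def using iffD2[OF T_fix[OF L, of c b] assms(2)] .
  have 2: "T (m a b) = m a b" unfolding T_def using iffD2[OF T_fix[OF L, of c "m a b"] assms(3)] .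
  have "m (T a) b = m a b" using A 1 2 by simp
  hence "T a = a" by (rule loop_rcancel[OF L])
  thus ?thesis using iffD1[OF T_fix[OF L, of c a]] unfolding T_def by simp
qed

theorem proposition4p4:
  fixes m1 :: "'a \<Rightarrow> 'a \<Rightarrow> 'a" and m2 :: "'b \<Rightarrow> 'b \<Rightarrow> 'b" and f :: "'a \<Rightarrow> 'b"
  assumes "automorphic_loop m1"
    and "automorphic_loop m2"
    and "special_half_isomorphism m1 m2 f"
    and "\<not> (\<exists>x y z. GG_triple m1 m2 f x y z)"
  shows "trivial_half_isomorphism m1 m2 f"
proof (rule ccontr)
  assume nt: "\<not> trivial_half_isomorphism m1 m2 f"
  have hf: "bij f" "\<forall>x y. f (m1 x y) = m2 (f x) (f y) \<or> f (m1 x y) = m2 (f y) (f x)"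
    using assms(3) unfolding special_half_isomorphism_def half_isomorphism_def by auto
  have hg: "\<forall>u v. inv f (m2 u v) = m1 (inv f u) (inv f v) \<or> inv f (m2 u v) = m1 (inv f v) (inv f u)"
    using assms(3) unfolding special_half_isomorphism_def half_isomorphism_def by auto
  have inj: "inj f" using hf(1) bij_is_inj by blast
  have gf: "\<And>x. inv f (f x) = x" using inj by simp
  define A where "A = {x. \<forall>y. f (m1 x y) = m2 (f x) (f y)}"
  define B where "B = {x. \<forall>y. f (m1 x y) = m2 (f y) (f x)}"
  have AB: "x \<in> A \<or> x \<in> B" for x
  proof (rule ccontr)
    assume "\<not> (x \<in> A \<or> x \<in> B)"
    then obtain y z where y: "f (m1 x y) \<noteq> m2 (f x) (f y)" and z: "f (m1 x z) \<noteq> m2 (f z) (f x)"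
      unfolding A_def B_def by blast
    have "f (m1 x y) = m2 (f y) (f x)" using y hf(2) by blast
    moreover have "f (m1 x z) = m2 (f x) (f z)" using z hf(2) by blast
    ultimately have "GG_triple m1 m2 f x z y" unfolding GG_triple_def using y z by simp
    thus False using assms(4) by blast
  qed
  have comm: "m1 a b = m1 b a" if "a \<in> A" "b \<in> B" for a b
  proof -
    have "f (m1 a b) = f (m1 b a)" using that unfolding A_def B_def by simp
    thus ?thesis using inj by (simp add: inj_eq)
  qed
  have noncomm: "m1 x y \<noteq> m1 y x" if "f (m1 x y) = m2 (f x) (f y)" "m2 (f x) (f y) \<noteq> m2 (f y) (f x)" for x y
  proof
    assume c: "m1 x y = m1 y x"
    have "inv f (m2 (f y) (f x)) = m1 (inv f (f y)) (inv f (f x)) \<or> inv f (m2 (f y) (f x)) = m1 (inv f (f x)) (inv f (f y))" using hg by blast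
    hence "inv f (m2 (f y) (f x)) = m1 y x \<or> inv f (m2 (f y) (f x)) = m1 x y" using gf by simp
    hence "m2 (f y) (f x) = f (m1 y x) \<or> m2 (f y) (f x) = f (m1 x y)"
      using hf(1) by (metis bij_inv_eq_iff)
    thus False using that c by auto
  qed
  from nt obtain x1 y1 where "f (m1 x1 y1) \<noteq> m2 (f x1) (f y1)"
    unfolding trivial_half_isomorphism_def isomorphism_def using hf(1) by blast
  hence w1: "x1 \<notin> A" unfolding A_def by blast
  from nt obtain x2 y2 where "f (m1 x2 y2) \<noteq> m2 (f y2) (f x2)"
    unfolding trivial_half_isomorphism_def anti_isomorphism_def using hf(1) by blast
  hence x2: "x2 \<notin> B" unfolding B_def by blast
  define x where "x = x2"
  define w where "w = x1"
  have xA: "x \<in> A" using x2 AB x_def by blast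
  have wB: "w \<in> B" using w1 AB w_def by blast
  obtain y where y: "m1 x y \<noteq> m1 y x"
  proof -
    from x2 obtain y where "f (m1 x y) \<noteq> m2 (f y) (f x)" unfolding B_def x_def by blast
    hence "f (m1 x y) = m2 (f x) (f y)" "m2 (f x) (f y) \<noteq> m2 (f y) (f x)" using xA unfolding A_def by auto
    thus ?thesis using noncomm that by blast
  qed
  have yA: "y \<in> A" using y comm[OF xA] AB by force
  obtain z where z: "m1 w z \<noteq> m1 z w"
  proof -
    from w1 obtain z where "f (m1 w z) \<noteq> m2 (f w) (f z)" unfolding A_def w_def by blast
    hence "f (m1 w z) = m2 (f z) (f w)" "m2 (f z) (f w) \<noteq> m2 (f w) (f z)" using wB unfolding B_def by auto
    hence "m1 z w \<noteq> m1 w z"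
    proof -
      assume h1: "f (m1 w z) = m2 (f z) (f w)" "m2 (f z) (f w) \<noteq> m2 (f w) (f z)"
      show "m1 z w \<noteq> m1 w z"
      proof
        assume c: "m1 z w = m1 w z"
        hence "f (m1 z w) = m2 (f z) (f w)" using h1 by simp
        hence "m1 z w \<noteq> m1 w z" using noncomm h1(2) by blast
        thus False using c by simp
      qed
    qed
    thus ?thesis using that[of z] by auto
  qed
  have zB: "z \<in> B" using z comm[OF _ wB] AB by force
  show False
  proof (cases "m1 x w \<in> B")
    case True
    have "m1 (m1 x w) y = m1 y (m1 x w)" using comm[OF yA True] by simp
    moreover have "m1 w y = m1 y w" using comm[OF yA wB] by simp
    ultimately have "m1 x y = m1 y x" using comm_rdiv[OF assms(1)] by blast
    thus False using y by simp
  next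
    case False
    hence qA: "m1 x w \<in> A" using AB by blast
    have "m1 (m1 x w) z = m1 z (m1 x w)" using comm[OF qA zB] by simp
    moreover have "m1 x z = m1 z x" using comm[OF xA zB] by simp
    ultimately have "m1 w z = m1 z w" using comm_ldiv[OF assms(1)] by blast
    thus False using z by simp
  qed
qed

end
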